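(* Let $n\geq1$, $\eta=(z,d_0,d_1,\ldots,d_r)\in\Omega$ and $1\leq l<j\leq n$. (a) If $v_{l,\eta}=(p_l,0)$ and $v_{j,\eta}=(p_j,0)$, then $\pi_1(v_{j,\eta}+(n-j)(1,1))\leq\pi_1(v_{l,\eta}+(n-l)(1,1))$, with equality if and only if there exists $1\leq t\leq r$ with $\sum_{i=0}^{t-1}d_i<l<j\leq\sum_{i=0}^td_i$. (b) If $v_{l,\eta}=(0,p_l)$ and $v_{j,\eta}=(0,p_j)$, then $\pi_2(v_{j,\eta}+(n-j)(1,1))\leq\pi_2(v_{l,\eta}+(n-l)(1,1))$, with equality if and only if there exists $1\leq t\leq r$ with $\sum_{i=0}^{t-1}d_i<l<j\leq\sum_{i=0}^td_i$.
   Context: $\pi_i$ is the $i$-th coordinate. $\Omega$ is the set of $\eta=(z,d_0,\ldots,d_r)$ with $z\in\{0,1\}$, $d_0=0$, $d_i\geq1$ ($1\leq i\leq r$), $\sum_{i=0}^rd_i=n$. For $j\in\{1,\ldots,n\}$, $t\in\{1,\ldots,r\}$ is unique with $\sum_{i=0}^{t-1}d_i<j\leq\sum_{i=0}^td_i$, $c=j-\sum_{i=0}^{t-1}d_i$; $v_{j,\eta}=(\sum_{i\text{ odd},i<t}d_i+c,0)$ if $z=1,t$ odd; $(0,\sum_{i\text{ even},i<t}d_i+c)$ if $z=1,t$ even; $(0,\sum_{i\text{ odd},i<t}d_i+c)$ if $z=0,t$ odd; $(\sum_{i\text{ even},i<t}d_i+c,0)$ if $z=0,t$ even. *)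

theory Defs
  imports Main
begin

text \<open>eta = (z, d_0, ..., d_r) is represented as a pair (z, ds) with ds = [d_0, ..., d_r],
  so r = length ds - 1.\<close>

definition Omega :: "nat \<Rightarrow> (nat \<times> nat list) set" where
  "Omega n = {(z, ds). z \<in> {0, 1} \<and> ds \<noteq> [] \<and> ds ! 0 = 0 \<and>
      (\<forall>i \<in> {1..length ds - 1}. ds ! i \<ge> 1) \<and> sum_list ds = n}"

definition psum :: "nat list \<Rightarrow> nat \<Rightarrow> nat" where
  "psum ds t = (\<Sum>i<t. ds ! i)"

definition blk :: "nat list \<Rightarrow> nat \<Rightarrow> nat" where
  "blk ds j = (THE t. 1 \<le> t \<and> t \<le> length ds - 1 \<and> psum ds t < j \<and> j \<le> psum ds (Suc t))"

definition vv :: "nat \<times> nat list \<Rightarrow> nat \<Rightarrow> nat \<times> nat" where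
  "vv eta j = (let z = fst eta; ds = snd eta; t = blk ds j; c = j - psum ds t;
      so = (\<Sum>i | i < t \<and> odd i. ds ! i); se = (\<Sum>i | i < t \<and> even i. ds ! i) in
    if z = 1 then (if odd t then (so + c, 0) else (0, se + c))
    else (if odd t then (0, so + c) else (se + c, 0)))"

end

theory Submission
  imports Defs
begin

definition Qs :: "nat list \<Rightarrow> nat \<Rightarrow> nat" where
  "Qs ds t = (\<Sum>i | i < t \<and> odd i = odd t. ds ! i)"
definition Qo :: "nat list \<Rightarrow> nat \<Rightarrow> nat" where
  "Qo ds t = (\<Sum>i | i < t \<and> odd i \<noteq> odd t. ds ! i)"

lemma vv_eq: "vv (z,ds) j = (let t = blk ds j; c = j - psum ds t in
   if (z=1) = odd t then (Qs ds t + c, 0) else (0, Qs ds t + c))"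
proof -
  define t where "t = blk ds j"
  have o: "odd t \<Longrightarrow> {i. i < t \<and> odd i = odd t} = {i. i < t \<and> odd i}" by auto
  have e: "even t \<Longrightarrow> {i. i < t \<and> odd i = odd t} = {i. i < t \<and> even i}" by auto
  show ?thesis unfolding vv_def Let_def Qs_def
    by (cases "z = 1"; cases "odd t"; simp add: o e t_def[symmetric])
qed

lemma psum_mono: "a \<le> b \<Longrightarrow> psum ds a \<le> psum ds b"
  unfolding psum_def by (rule sum_mono2) auto

lemma psum_split: "psum ds t = Qs ds t + Qo ds t"
proof -
  have "{..<t} = {i. i < t \<and> odd i = odd t} \<union> {i. i < t \<and> odd i \<noteq> odd t}" by auto
  then have "psum ds t = (\<Sum>i \<in> {i. i < t \<and> odd i = odd t} \<union> {i. i < t \<and> odd i \<noteq> odd t}. ds ! i)"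
    unfolding psum_def by simp
  also have "\<dots> = Qs ds t + Qo ds t" unfolding Qs_def Qo_def by (rule sum.union_disjoint) auto
  finally show ?thesis .
qed

lemma psum_last: assumes "ds \<noteq> []" shows "psum ds (Suc (length ds - 1)) = sum_list ds"
  using assms unfolding psum_def by (simp add: sum_list_sum_nth atLeast0LessThan)

lemma psum_1: "ds \<noteq> [] \<Longrightarrow> ds ! 0 = 0 \<Longrightarrow> psum ds 1 = 0"
  unfolding psum_def by simp

lemma blk_unique:
  assumes "psum ds t < j" "j \<le> psum ds (Suc t)" "psum ds t' < j" "j \<le> psum ds (Suc t')"
  shows "t = t'"
proof (rule ccontr)
  assume "t \<noteq> t'"
  then consider "Suc t \<le> t'" | "Suc t' \<le> t" by linarith
  then show False
    by cases (use assms psum_mono[of "Suc t" t' ds] psum_mono[of "Suc t'" t ds] in auto)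
qed

lemma blk_props:
  assumes "(z, ds) \<in> Omega n" "1 \<le> j" "j \<le> n"
  shows "1 \<le> blk ds j \<and> blk ds j \<le> length ds - 1 \<and> psum ds (blk ds j) < j \<and> j \<le> psum ds (Suc (blk ds j))"
proof -
  have ne: "ds \<noteq> []" and d0: "ds ! 0 = 0" and sl: "sum_list ds = n" using assms(1) unfolding Omega_def by auto
  define r where "r = length ds - 1"
  have ex: "j \<le> psum ds (Suc r)" using psum_last[OF ne] sl assms r_def by simp
  define t where "t = (LEAST t. j \<le> psum ds (Suc t))"
  have t1: "j \<le> psum ds (Suc t)" unfolding t_def by (rule LeastI[of _ r]) (rule ex)
  have tr: "t \<le> r" unfolding t_def by (rule Least_le) (rule ex)
  have tpos: "t \<ge> 1"
  proof (rule ccontr)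
    assume "\<not> t \<ge> 1" then have "t = 0" by simp
    with t1 psum_1[OF ne d0] assms(2) show False by simp
  qed
  have t2: "psum ds t < j"
  proof (rule ccontr)
    assume "\<not> psum ds t < j"
    then have "j \<le> psum ds (Suc (t - 1))" using tpos by simp
    then have "t \<le> t - 1" unfolding t_def by (rule Least_le)
    with tpos show False by simp
  qed
  have "blk ds j = t" unfolding blk_def
    by (rule the_equality) (use t1 t2 tpos tr r_def blk_unique in auto)
  then show ?thesis using t1 t2 tpos tr r_def by simp
qed

lemma Qo_val:
  assumes "(z, ds) \<in> Omega n" "1 \<le> j" "j \<le> n"
  shows "Qs ds (blk ds j) + (j - psum ds (blk ds j)) + (n - j) = n - Qo ds (blk ds j)"
    and "Qs ds (blk ds j) + (j - psum ds (blk ds j)) \<noteq> 0"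
  using blk_props[OF assms] psum_split[of ds "blk ds j"] assms(3) by auto

lemma Qo_strict:
  assumes "t1 < t2" "odd t1 = odd t2" "t2 \<le> length ds - 1" "\<forall>i \<in> {1..length ds - 1}. ds ! i \<ge> 1"
  shows "Qo ds t1 < Qo ds t2"
proof -
  have k: "Suc t1 < t2" using assms(1,2) by (metis Suc_lessI odd_Suc_minus_one odd_pos dvd_triv_left even_Suc)
  have dk: "ds ! Suc t1 \<ge> 1" using assms(3,4) k by auto
  have S: "{i. i < t2 \<and> odd i \<noteq> odd t2} = {i. i < t2 \<and> odd i \<noteq> odd t2} " ..
  have sub: "insert (Suc t1) {i. i < t1 \<and> odd i \<noteq> odd t1} \<subseteq> {i. i < t2 \<and> odd i \<noteq> odd t2}"
    using k assms(1,2) by auto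
  have "Qo ds t1 + ds ! Suc t1 = (\<Sum>i \<in> insert (Suc t1) {i. i < t1 \<and> odd i \<noteq> odd t1}. ds ! i)"
    unfolding Qo_def by (subst sum.insert) auto
  also have "\<dots> \<le> Qo ds t2" unfolding Qo_def by (rule sum_mono2[OF _ sub]) auto
  finally show ?thesis using dk by simp
qed

lemma cmp:
  assumes "(z, ds) \<in> Omega n" "1 \<le> l" "l < j" "j \<le> n" "odd (blk ds l) = odd (blk ds j)"
  shows "n - Qo ds (blk ds j) \<le> n - Qo ds (blk ds l) \<and>
     (n - Qo ds (blk ds j) = n - Qo ds (blk ds l) \<longleftrightarrow>
       (\<exists>t. 1 \<le> t \<and> t \<le> length ds - 1 \<and> psum ds t < l \<and> j \<le> psum ds (Suc t)))"
proof -
  have pos: "\<forall>i \<in> {1..length ds - 1}. ds ! i \<ge> 1" using assms(1) unfolding Omega_def by auto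
  note bl = blk_props[OF assms(1,2)] and bj = blk_props[OF assms(1)] 
  have bj': "1 \<le> blk ds j \<and> blk ds j \<le> length ds - 1 \<and> psum ds (blk ds j) < j \<and> j \<le> psum ds (Suc (blk ds j))"
    using bj assms by simp
  have bl': "1 \<le> blk ds l \<and> blk ds l \<le> length ds - 1 \<and> psum ds (blk ds l) < l \<and> l \<le> psum ds (Suc (blk ds l))"
    using bl assms by simp
  have le: "blk ds l \<le> blk ds j"
  proof (rule ccontr)
    assume "\<not> ?thesis"
    then have "psum ds (Suc (blk ds j)) \<le> psum ds (blk ds l)" by (intro psum_mono) simp
    with bj' bl' assms(3) show False by simp
  qed
  have Qj: "Qo ds (blk ds j) < j" using bj' psum_split[of ds "blk ds j"] by simp
  have iff: "(\<exists>t. 1 \<le> t \<and> t \<le> length ds - 1 \<and> psum ds t < l \<and> j \<le> psum ds (Suc t)) \<longleftrightarrow> blk ds l = blk ds j"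
  proof
    assume "\<exists>t. 1 \<le> t \<and> t \<le> length ds - 1 \<and> psum ds t < l \<and> j \<le> psum ds (Suc t)"
    then obtain t where t: "psum ds t < l" "j \<le> psum ds (Suc t)" by blast
    have "blk ds l = t" using blk_unique[of ds "blk ds l" l t] bl' t assms(3) by simp
    moreover have "blk ds j = t" using blk_unique[of ds "blk ds j" j t] bj' t assms(3) by simp
    ultimately show "blk ds l = blk ds j" by simp
  next
    assume "blk ds l = blk ds j"
    then show "\<exists>t. 1 \<le> t \<and> t \<le> length ds - 1 \<and> psum ds t < l \<and> j \<le> psum ds (Suc t)"
      using bl' bj' by metis
  qed
  show ?thesis
  proof (cases "blk ds l = blk ds j")
    case True then show ?thesis using iff by simp
  next
    case False
    then have "Qo ds (blk ds l) < Qo ds (blk ds j)"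
      using Qo_strict[OF _ assms(5) _ pos] le bj' by simp
    then have "n - Qo ds (blk ds j) < n - Qo ds (blk ds l)" using Qj assms(4) by linarith
    then show ?thesis using iff False by (metis less_imp_le less_irrefl)
  qed
qed

theorem lemma2p8:
  fixes n l j z :: nat and ds :: "nat list"
  assumes "n \<ge> 1" and "(z, ds) \<in> Omega n" and "1 \<le> l" and "l < j" and "j \<le> n"
  shows "(\<forall>pl pj. vv (z, ds) l = (pl, 0) \<and> vv (z, ds) j = (pj, 0) \<longrightarrow>
            fst (vv (z, ds) j) + (n - j) \<le> fst (vv (z, ds) l) + (n - l) \<and>
            (fst (vv (z, ds) j) + (n - j) = fst (vv (z, ds) l) + (n - l) \<longleftrightarrow>
              (\<exists>t. 1 \<le> t \<and> t \<le> length ds - 1 \<and> psum ds t < l \<and> j \<le> psum ds (Suc t))))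
       \<and> (\<forall>pl pj. vv (z, ds) l = (0, pl) \<and> vv (z, ds) j = (0, pj) \<longrightarrow>
            snd (vv (z, ds) j) + (n - j) \<le> snd (vv (z, ds) l) + (n - l) \<and>
            (snd (vv (z, ds) j) + (n - j) = snd (vv (z, ds) l) + (n - l) \<longleftrightarrow>
              (\<exists>t. 1 \<le> t \<and> t \<le> length ds - 1 \<and> psum ds t < l \<and> j \<le> psum ds (Suc t))))"
proof -
  have l1: "1 \<le> l" "l \<le> n" and j1: "1 \<le> j" "j \<le> n" using assms by auto
  note vl = Qo_val[OF assms(2) l1] and vj = Qo_val[OF assms(2) j1]
  note c = cmp[OF assms(2,3,4,5)]
  show ?thesis
  proof (rule conjI; intro allI impI)
    fix pl pj assume h: "vv (z, ds) l = (pl, 0) \<and> vv (z, ds) j = (pj, 0)"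
    then have a: "(z=1) = odd (blk ds l)" "(z=1) = odd (blk ds j)"
      using vl(2) vj(2) unfolding vv_eq Let_def by (auto split: if_splits)
    then have "fst (vv (z, ds) j) + (n - j) = n - Qo ds (blk ds j)"
      "fst (vv (z, ds) l) + (n - l) = n - Qo ds (blk ds l)"
      using vl(1) vj(1) unfolding vv_eq Let_def by auto
    then show "fst (vv (z, ds) j) + (n - j) \<le> fst (vv (z, ds) l) + (n - l) \<and>
            (fst (vv (z, ds) j) + (n - j) = fst (vv (z, ds) l) + (n - l) \<longleftrightarrow>
              (\<exists>t. 1 \<le> t \<and> t \<le> length ds - 1 \<and> psum ds t < l \<and> j \<le> psum ds (Suc t)))"
      using c a by simp
  next
    fix pl pj assume h: "vv (z, ds) l = (0, pl) \<and> vv (z, ds) j = (0, pj)"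
    then have a: "(z=1) \<noteq> odd (blk ds l)" "(z=1) \<noteq> odd (blk ds j)"
      using vl(2) vj(2) unfolding vv_eq Let_def by (auto split: if_splits)
    then have "snd (vv (z, ds) j) + (n - j) = n - Qo ds (blk ds j)"
      "snd (vv (z, ds) l) + (n - l) = n - Qo ds (blk ds l)"
      using vl(1) vj(1) unfolding vv_eq Let_def by auto
    then show "snd (vv (z, ds) j) + (n - j) \<le> snd (vv (z, ds) l) + (n - l) \<and>
            (snd (vv (z, ds) j) + (n - j) = snd (vv (z, ds) l) + (n - l) \<longleftrightarrow>
              (\<exists>t. 1 \<le> t \<and> t \<le> length ds - 1 \<and> psum ds t < l \<and> j \<le> psum ds (Suc t)))"
      using c a by simp
  qed
qed

end
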